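(* Let $p,q\ge 1$ be integers. Let $\mu=(\mu_1,\dots,\mu_p)$ and $\nu=(\nu_1,\dots,\nu_q)$ be independent random probability vectors, with $\mu$ uniformly distributed on the probability simplex $\{\mu\in[0,1]^p:\sum_u\mu_u=1\}$ (Dirichlet law $\mathcal D_p$ with all parameters equal to $1$) and $\nu$ uniformly distributed on the probability simplex in $\mathbb{R}^q$ (Dirichlet law $\mathcal D_q$). Define $$\Delta=\mathbb{E}\left[\sum_{u=1}^p\sum_{v=1}^q\Big(\mu_u\nu_v-\Big(\frac{\mu_u}{q}+\frac{\nu_v}{p}-\frac{1}{pq}\Big)\Big)^2\right].$$ Then $$\Delta=\frac{1}{pq}\cdot\frac{p-1}{p+1}\cdot\frac{q-1}{q+1}\le\frac{1}{pq}.$$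
   Context: For margins $\mu,\nu$, the independence coupling is $(\mu\otimes\nu)_{u,v}=\mu_u\nu_v$ and the indetermination coupling is $(\mu\oplus\nu)_{u,v}=\frac{\mu_u}{q}+\frac{\nu_v}{p}-\frac{1}{pq}$; $\Delta$ is the expected squared Euclidean distance between them. *)

theory Defs
  imports "HOL-Probability.Probability"
begin

definition leb_coords :: "nat \<Rightarrow> (nat \<Rightarrow> real) measure" where
  "leb_coords p = PiM {..<p-1} (\<lambda>_. lborel)"

text \<open>The probability simplex in R^p, parametrised by its first p-1 coordinates.\<close>
definition simplex_coords :: "nat \<Rightarrow> (nat \<Rightarrow> real) set" where
  "simplex_coords p = {x \<in> space (leb_coords p). (\<forall>i<p-1. 0 \<le> x i) \<and> (\<Sum>i<p-1. x i) \<le> 1}"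

definition to_simplex :: "nat \<Rightarrow> (nat \<Rightarrow> real) \<Rightarrow> nat \<Rightarrow> real" where
  "to_simplex p x u = (if u < p - 1 then x u else 1 - (\<Sum>i<p-1. x i))"

text \<open>Flat Dirichlet law D_p (all parameters 1), i.e. the uniform law on the simplex,
  in the coordinates above (the map to_simplex p gives the actual vector).\<close>
definition dirichlet_flat :: "nat \<Rightarrow> (nat \<Rightarrow> real) measure" where
  "dirichlet_flat p = uniform_measure (leb_coords p) (simplex_coords p)"

definition indep_coupling :: "(nat \<Rightarrow> real) \<Rightarrow> (nat \<Rightarrow> real) \<Rightarrow> nat \<Rightarrow> nat \<Rightarrow> real" where
  "indep_coupling \<mu> \<nu> u v = \<mu> u * \<nu> v"

definition indet_coupling :: "nat \<Rightarrow> nat \<Rightarrow> (nat \<Rightarrow> real) \<Rightarrow> (nat \<Rightarrow> real) \<Rightarrow> nat \<Rightarrow> nat \<Rightarrow> real" where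
  "indet_coupling p q \<mu> \<nu> u v = \<mu> u / real q + \<nu> v / real p - 1 / (real p * real q)"

definition Delta :: "nat \<Rightarrow> nat \<Rightarrow> real" where
  "Delta p q = integral\<^sup>L (dirichlet_flat p \<Otimes>\<^sub>M dirichlet_flat q)
     (\<lambda>(x, y). let \<mu> = to_simplex p x; \<nu> = to_simplex q y in
        \<Sum>u<p. \<Sum>v<q. (indep_coupling \<mu> \<nu> u v - indet_coupling p q \<mu> \<nu> u v)\<^sup>2)"

end

theory Submission
  imports Defs
begin

lemma int1:
  fixes c :: real
  assumes c: "0 \<le> c"
  shows "(\<integral>\<^sup>+y. ennreal (indicator {0..c} y * (c - y)^k) \<partial>lborel) = ennreal (c^(Suc k)/(Suc k))"
proof -
  have "((\<lambda>y. (c - y)^k) has_integral ((\<lambda>y. -((c - y)^(Suc k)/(Suc k))) c - (\<lambda>y. -((c - y)^(Suc k)/(Suc k))) 0)) {0..c}"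
    apply (rule fundamental_theorem_of_calculus)
     apply (rule c)
    apply (auto intro!: derivative_eq_intros simp: has_real_derivative_iff_has_vector_derivative[symmetric])
    apply (cases k; simp add: field_simps)
    done
  then have "((\<lambda>y. (c - y)^k) has_integral (c^(Suc k)/(Suc k))) {0..c}" by simp
  from nn_integral_has_integral_lebesgue[OF _ this] show ?thesis by (simp add: c)
qed

lemma int2:
  fixes c :: real
  assumes c: "0 \<le> c"
  shows "(\<integral>\<^sup>+y. ennreal (indicator {0..c} y * y^2) \<partial>lborel) = ennreal (c^3/3)"
proof -
  have "((\<lambda>y. y^2) has_integral ((\<lambda>y. y^3/3) c - (\<lambda>y. y^3/3) 0)) {0..c}"
    apply (rule fundamental_theorem_of_calculus)
     apply (rule c)
    apply (auto intro!: derivative_eq_intros simp: has_real_derivative_iff_has_vector_derivative[symmetric])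
    done
  then have "((\<lambda>y. y^2) has_integral (c^3/3)) {0..c}" by simp
  from nn_integral_has_integral_lebesgue[OF _ this] show ?thesis by (simp add: c)
qed

definition sf :: "nat set \<Rightarrow> real \<Rightarrow> nat \<Rightarrow> (nat \<Rightarrow> real) \<Rightarrow> real" where
  "sf I t k x = (if (\<forall>i\<in>I. 0 \<le> x i) \<and> (\<Sum>i\<in>I. x i) \<le> t then (t - (\<Sum>i\<in>I. x i))^k else 0)"

lemma sf_meas[measurable]: "finite I \<Longrightarrow> sf I t k \<in> borel_measurable (PiM I (\<lambda>_. lborel))"
  unfolding sf_def by measurable

interpretation pl: product_sigma_finite "\<lambda>_. lborel"
  by unfold_locales

lemma sf_insert:
  assumes "j \<notin> I" "finite I"
  shows "sf (insert j I) t k (x(j:=y)) = indicator {0..t - (\<Sum>i\<in>I. x i)} y * (if (\<forall>i\<in>I. 0 \<le> x i) then (t - (\<Sum>i\<in>I. x i) - y)^k else 0)"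
proof -
  have s: "(\<Sum>i\<in>I. (x(j:=y)) i) = (\<Sum>i\<in>I. x i)"
    using assms by (intro sum.cong) auto
  have s2: "(\<Sum>i\<in>insert j I. (x(j:=y)) i) = y + (\<Sum>i\<in>I. x i)"
    using assms s by (simp add: sum.insert)
  have b: "(\<forall>i\<in>insert j I. 0 \<le> (x(j:=y)) i) = (0 \<le> y \<and> (\<forall>i\<in>I. 0 \<le> x i))"
    using assms by auto
  show ?thesis unfolding sf_def s2 b
    by (auto simp: indicator_def algebra_simps)
qed

lemma core:
  assumes "finite I" "0 \<le> t"
  shows "(\<integral>\<^sup>+x. ennreal (sf I t k x) \<partial>PiM I (\<lambda>_. lborel)) = ennreal (fact k * t^(card I + k) / fact (card I + k))"
  using assms(1)
proof (induction I arbitrary: k rule: finite_induct)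
  case empty
  show ?case using assms(2) by (simp add: PiM_empty sf_def)
next
  case (insert j I)
  have "(\<integral>\<^sup>+x. ennreal (sf (insert j I) t k x) \<partial>PiM (insert j I) (\<lambda>_. lborel))
     = (\<integral>\<^sup>+x. (\<integral>\<^sup>+y. ennreal (sf (insert j I) t k (x(j:=y))) \<partial>lborel) \<partial>PiM I (\<lambda>_. lborel))"
    using insert by (intro pl.product_nn_integral_insert) auto
  also have "\<dots> = (\<integral>\<^sup>+x. ennreal (sf I t (Suc k) x / Suc k) \<partial>PiM I (\<lambda>_. lborel))"
  proof (intro nn_integral_cong)
    fix x
    show "(\<integral>\<^sup>+y. ennreal (sf (insert j I) t k (x(j:=y))) \<partial>lborel) = ennreal (sf I t (Suc k) x / Suc k)"
    proof (cases "(\<forall>i\<in>I. 0 \<le> x i) \<and> (\<Sum>i\<in>I. x i) \<le> t")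
      case True
      then show ?thesis using int1[of "t - (\<Sum>i\<in>I. x i)" k]
        by (subst sf_insert[OF insert(2,1)]) (simp add: sf_def)
    next
      case False
      then have "\<forall>y. sf (insert j I) t k (x(j:=y)) = 0"
        by (auto simp: sf_insert[OF insert(2,1)] indicator_def)
      moreover have "sf I t (Suc k) x = 0" unfolding sf_def using False by (rule if_not_P)
      ultimately show ?thesis by (simp del: fun_upd_apply)
    qed
  qed
  also have "\<dots> = (\<integral>\<^sup>+x. ennreal (sf I t (Suc k) x) * ennreal (1 / Suc k) \<partial>PiM I (\<lambda>_. lborel))"
    by (intro nn_integral_cong) (auto simp: ennreal_mult'[symmetric] sf_def)
  also have "\<dots> = (\<integral>\<^sup>+x. ennreal (sf I t (Suc k) x) \<partial>PiM I (\<lambda>_. lborel)) * ennreal (1 / Suc k)"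
    using insert by (intro nn_integral_multc) auto
  also have "\<dots> = ennreal (fact (Suc k) * t^(card I + Suc k) / fact (card I + Suc k) * (1 / Suc k))"
    using insert assms(2) by (simp add: ennreal_mult'[symmetric])
  also have "\<dots> = ennreal (fact k * t^(card (insert j I) + k) / fact (card (insert j I) + k))"
  proof -
    have c: "card I + Suc k = card (insert j I) + k" using insert by simp
    have f: "fact (Suc k) = (real (Suc k)) * (fact k :: real)" by (simp del: of_nat_Suc)
    show ?thesis unfolding c f by (simp del: of_nat_Suc fact_Suc)
  qed
  finally show ?case .
qed

definition sg :: "nat set \<Rightarrow> nat \<Rightarrow> real \<Rightarrow> (nat \<Rightarrow> real) \<Rightarrow> real" where
  "sg I j t x = (if (\<forall>i\<in>I. 0 \<le> x i) \<and> (\<Sum>i\<in>I. x i) \<le> t then (x j)^2 else 0)"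

lemma sg_meas[measurable]: "finite I \<Longrightarrow> j \<in> I \<Longrightarrow> sg I j t \<in> borel_measurable (PiM I (\<lambda>_. lborel))"
  unfolding sg_def by measurable

lemma sg_insert:
  assumes "j \<notin> I" "finite I"
  shows "sg (insert j I) j t (x(j:=y)) = indicator {0..t - (\<Sum>i\<in>I. x i)} y * (if (\<forall>i\<in>I. 0 \<le> x i) then y^2 else 0)"
proof -
  have s: "(\<Sum>i\<in>I. (x(j:=y)) i) = (\<Sum>i\<in>I. x i)"
    using assms by (intro sum.cong) auto
  have s2: "(\<Sum>i\<in>insert j I. (x(j:=y)) i) = y + (\<Sum>i\<in>I. x i)"
    using assms s by (simp add: sum.insert)
  have b: "(\<forall>i\<in>insert j I. 0 \<le> (x(j:=y)) i) = (0 \<le> y \<and> (\<forall>i\<in>I. 0 \<le> x i))"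
    using assms by auto
  show ?thesis unfolding sg_def s2 b
    by (auto simp: indicator_def algebra_simps)
qed

lemma sq_int:
  assumes "finite I" "j \<in> I" "0 \<le> t"
  shows "(\<integral>\<^sup>+x. ennreal (sg I j t x) \<partial>PiM I (\<lambda>_. lborel)) = ennreal (2 * t^(card I + 2) / fact (card I + 2))"
proof -
  define J where "J = I - {j}"
  have I: "I = insert j J" "j \<notin> J" "finite J" using assms unfolding J_def by auto
  have "(\<integral>\<^sup>+x. ennreal (sg (insert j J) j t x) \<partial>PiM (insert j J) (\<lambda>_. lborel))
     = (\<integral>\<^sup>+x. (\<integral>\<^sup>+y. ennreal (sg (insert j J) j t (x(j:=y))) \<partial>lborel) \<partial>PiM J (\<lambda>_. lborel))"
    using I by (intro pl.product_nn_integral_insert) auto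
  also have "\<dots> = (\<integral>\<^sup>+x. ennreal (sf J t 3 x / 3) \<partial>PiM J (\<lambda>_. lborel))"
  proof (intro nn_integral_cong)
    fix x
    show "(\<integral>\<^sup>+y. ennreal (sg (insert j J) j t (x(j:=y))) \<partial>lborel) = ennreal (sf J t 3 x / 3)"
    proof (cases "(\<forall>i\<in>J. 0 \<le> x i) \<and> (\<Sum>i\<in>J. x i) \<le> t")
      case True
      then show ?thesis using int2[of "t - (\<Sum>i\<in>J. x i)"]
        by (subst sg_insert[OF I(2,3)]) (simp add: sf_def)
    next
      case False
      then have "\<forall>y. sg (insert j J) j t (x(j:=y)) = 0"
        by (auto simp: sg_insert[OF I(2,3)] indicator_def)
      moreover have "sf J t 3 x = 0" unfolding sf_def using False by (rule if_not_P)
      ultimately show ?thesis by (simp del: fun_upd_apply)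
    qed
  qed
  also have "\<dots> = (\<integral>\<^sup>+x. ennreal (sf J t 3 x) * ennreal (1 / 3) \<partial>PiM J (\<lambda>_. lborel))"
    by (intro nn_integral_cong) (auto simp: ennreal_mult'[symmetric] sf_def)
  also have "\<dots> = (\<integral>\<^sup>+x. ennreal (sf J t 3 x) \<partial>PiM J (\<lambda>_. lborel)) * ennreal (1 / 3)"
    using I by (intro nn_integral_multc) auto
  also have "\<dots> = ennreal (fact 3 * t^(card J + 3) / fact (card J + 3) * (1 / 3))"
    using I assms(3) core[of J t 3] by (simp add: ennreal_mult'[symmetric])
  also have "\<dots> = ennreal (2 * t^(card I + 2) / fact (card I + 2))"
  proof -
    have c: "card J + 3 = card I + 2" using I by simp
    have f: "fact 3 = (6::real)" by (simp add: fact_numeral)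
    show ?thesis unfolding c f by (simp add: mult_ac)
  qed
  finally show ?thesis using I(1) by simp
qed

definition vF :: "nat \<Rightarrow> (nat \<Rightarrow> real) \<Rightarrow> real" where
  "vF p x = (\<Sum>u<p. (to_simplex p x u - 1 / real p)^2)"

lemma ts_meas[measurable]: "(\<lambda>x. to_simplex p x u) \<in> borel_measurable (leb_coords p)"
proof (cases "u < p - 1")
  case True
  then have "(\<lambda>x. to_simplex p x u) = (\<lambda>x. x u)" by (auto simp: to_simplex_def)
  then show ?thesis using True unfolding leb_coords_def by simp
next
  case False
  then have "(\<lambda>x. to_simplex p x u) = (\<lambda>x. 1 - (\<Sum>i<p-1. x i))" by (auto simp: to_simplex_def)
  then show ?thesis unfolding leb_coords_def by simp
qed

lemma vF_meas[measurable]: "vF p \<in> borel_measurable (leb_coords p)"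
  unfolding vF_def by measurable

lemma simplex_sets[measurable]: "simplex_coords p \<in> sets (leb_coords p)"
proof -
  have "simplex_coords p = {x \<in> space (leb_coords p). (\<forall>i\<in>{..<p-1}. 0 \<le> x i) \<and> (\<Sum>i<p-1. x i) \<le> 1}"
    unfolding simplex_coords_def by auto
  also have "\<dots> \<in> sets (leb_coords p)" unfolding leb_coords_def by measurable
  finally show ?thesis .
qed

lemma sets_df: "sets (dirichlet_flat p) = sets (leb_coords p)"
  unfolding dirichlet_flat_def uniform_measure_def by simp

lemma vF_meas'[measurable]: "vF p \<in> borel_measurable (dirichlet_flat p)"
  using vF_meas measurable_cong_sets[OF sets_df refl] by blast

lemma vol_simplex: "emeasure (leb_coords p) (simplex_coords p) = ennreal (1 / fact (p - 1))"
proof -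
  have "emeasure (leb_coords p) (simplex_coords p) = (\<integral>\<^sup>+x. indicator (simplex_coords p) x \<partial>leb_coords p)"
    by simp
  also have "\<dots> = (\<integral>\<^sup>+x. ennreal (sf {..<p-1} 1 0 x) \<partial>PiM {..<p-1} (\<lambda>_. lborel))"
    unfolding leb_coords_def
    by (intro nn_integral_cong) (auto simp: indicator_def sf_def simplex_coords_def leb_coords_def)
  also have "\<dots> = ennreal (1 / fact (p - 1))" by (subst core) auto
  finally show ?thesis .
qed

lemma mom2:
  assumes "u < p"
  shows "(\<integral>\<^sup>+x. ennreal ((to_simplex p x u)^2) * indicator (simplex_coords p) x \<partial>leb_coords p) = ennreal (2 / fact (p + 1))"
proof (cases "u < p - 1")
  case True
  have "(\<integral>\<^sup>+x. ennreal ((to_simplex p x u)^2) * indicator (simplex_coords p) x \<partial>leb_coords p)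
      = (\<integral>\<^sup>+x. ennreal (sg {..<p-1} u 1 x) \<partial>PiM {..<p-1} (\<lambda>_. lborel))"
    unfolding leb_coords_def using True
    by (intro nn_integral_cong) (auto simp: indicator_def sg_def simplex_coords_def leb_coords_def to_simplex_def)
  also have "\<dots> = ennreal (2 / fact (p + 1))" using True assms by (subst sq_int) auto
  finally show ?thesis .
next
  case False
  have "(\<integral>\<^sup>+x. ennreal ((to_simplex p x u)^2) * indicator (simplex_coords p) x \<partial>leb_coords p)
      = (\<integral>\<^sup>+x. ennreal (sf {..<p-1} 1 2 x) \<partial>PiM {..<p-1} (\<lambda>_. lborel))"
    unfolding leb_coords_def using False
    by (intro nn_integral_cong) (auto simp: indicator_def sf_def simplex_coords_def leb_coords_def to_simplex_def)
  also have "\<dots> = ennreal (2 / fact (p + 1))" using False assms by (subst core) auto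
  finally show ?thesis .
qed

lemma sum_ts: "x \<in> simplex_coords p \<Longrightarrow> p \<ge> 1 \<Longrightarrow> (\<Sum>u<p. to_simplex p x u) = 1"
proof -
  assume "p \<ge> 1"
  then obtain n where p: "p = Suc n" by (cases p) auto
  have "(\<Sum>u<n. to_simplex p x u) = (\<Sum>u<n. x u)"
    by (intro sum.cong) (auto simp: to_simplex_def p)
  then show ?thesis by (simp add: p to_simplex_def)
qed

lemma vF_simplex: "x \<in> simplex_coords p \<Longrightarrow> p \<ge> 1 \<Longrightarrow> vF p x + 1 / real p = (\<Sum>u<p. (to_simplex p x u)^2)"
proof -
  assume x: "x \<in> simplex_coords p" and p: "p \<ge> 1"
  have "vF p x = (\<Sum>u<p. (to_simplex p x u)^2) - 2 / real p * (\<Sum>u<p. to_simplex p x u) + real p * (1 / real p)^2"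
    unfolding vF_def power2_diff by (simp add: sum.distrib sum_subtractf sum_distrib_left sum_divide_distrib algebra_simps)
  also have "\<dots> = (\<Sum>u<p. (to_simplex p x u)^2) - 1 / real p"
    using sum_ts[OF x p] p by (simp add: power2_eq_square field_simps)
  finally show ?thesis by simp
qed

lemma arith1:
  assumes "p \<ge> (1::nat)"
  shows "real p * (2 / fact (p + 1)) = ((real p - 1) / (real p * (real p + 1))) / fact (p - 1) + 1 / real p / fact (p - 1)"
proof -
  obtain n where p: "p = Suc n" using assms by (cases p) auto
  have f: "fact (p + 1) = (real n + 2) * (real n + 1) * (fact n :: real)"
    unfolding p by (simp add: algebra_simps)
  have fn: "(fact n :: real) > 0" by simp
  have e: "real p = real n + 1" "real (p - 1) = real n" by (simp_all add: p)
  have g: "(N + 1) * (2 / ((N + 2) * (N + 1) * F)) = ((N + 1 - 1) / ((N + 1) * (N + 1 + 1))) / F + 1 / (N + 1) / F"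
    if "F > 0" "N \<ge> 0" for F N :: real
    using that by (simp add: divide_simps) (simp add: algebra_simps)
  have pm: "p - 1 = n" by (simp add: p)
  show ?thesis unfolding f e pm using g[OF fn, of "real n"] by simp
qed

lemma vF_int:
  assumes p: "p \<ge> 1"
  shows "(\<integral>\<^sup>+x. ennreal (vF p x) \<partial>dirichlet_flat p) = ennreal ((real p - 1) / (real p * (real p + 1)))"
proof -
  let ?L = "leb_coords p" and ?S = "simplex_coords p"
  define c where "c = (real p - 1) / (real p * (real p + 1))"
  have c0: "0 \<le> c" using p unfolding c_def by auto
  have A: "(\<integral>\<^sup>+x. ennreal (vF p x) \<partial>dirichlet_flat p) = (\<integral>\<^sup>+x. ennreal (vF p x) * indicator ?S x \<partial>?L) / emeasure ?L ?S"
    unfolding dirichlet_flat_def by (rule nn_integral_uniform_measure) auto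
  have "(\<integral>\<^sup>+x. ennreal (vF p x) * indicator ?S x \<partial>?L) + ennreal (1 / real p) * emeasure ?L ?S
      = (\<integral>\<^sup>+x. ennreal (vF p x) * indicator ?S x + ennreal (1 / real p) * indicator ?S x \<partial>?L)"
    by (subst nn_integral_add) (auto simp: nn_integral_cmult_indicator)
  also have "\<dots> = (\<integral>\<^sup>+x. (\<Sum>u<p. ennreal ((to_simplex p x u)^2) * indicator ?S x) \<partial>?L)"
  proof (intro nn_integral_cong)
    fix x
    show "ennreal (vF p x) * indicator ?S x + ennreal (1 / real p) * indicator ?S x = (\<Sum>u<p. ennreal ((to_simplex p x u)^2) * indicator ?S x)"
    proof (cases "x \<in> ?S")
      case True
      have v: "0 \<le> vF p x" unfolding vF_def by (auto intro: sum_nonneg)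
      have "ennreal (vF p x) + ennreal (1 / real p) = ennreal (\<Sum>u<p. (to_simplex p x u)^2)"
        using vF_simplex[OF True p] v by (simp add: ennreal_plus[symmetric])
      also have "\<dots> = (\<Sum>u<p. ennreal ((to_simplex p x u)^2))"
        by (rule sum_ennreal[symmetric]) simp
      finally show ?thesis using True by simp
    qed simp
  qed
  also have "\<dots> = (\<Sum>u<p. (\<integral>\<^sup>+x. ennreal ((to_simplex p x u)^2) * indicator ?S x \<partial>?L))"
    by (rule nn_integral_sum) auto
  also have "\<dots> = (\<Sum>u<p. ennreal (2 / fact (p + 1)))"
    by (intro sum.cong refl mom2) simp
  also have "\<dots> = ennreal (real p * (2 / fact (p + 1)))"
    by (simp add: ennreal_of_nat_eq_real_of_nat ennreal_mult[symmetric])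
  also have "\<dots> = ennreal (c / fact (p - 1)) + ennreal (1 / real p) * emeasure ?L ?S"
  proof -
    have f0: "(0::real) < fact (p - 1)" by simp
    have "ennreal (real p * (2 / fact (p + 1))) = ennreal (c / fact (p - 1) + 1 / real p / fact (p - 1))"
      unfolding arith1[OF p] c_def ..
    also have "\<dots> = ennreal (c / fact (p - 1)) + ennreal (1 / real p / fact (p - 1))"
      using c0 f0 by (intro ennreal_plus) auto
    also have "ennreal (1 / real p / fact (p - 1)) = ennreal (1 / real p) * ennreal (1 / fact (p - 1))"
      by (simp add: ennreal_mult[symmetric])
    finally show ?thesis unfolding vol_simplex .
  qed
  finally have X: "(\<integral>\<^sup>+x. ennreal (vF p x) * indicator ?S x \<partial>?L) = ennreal (c / fact (p - 1))"
    unfolding vol_simplex by (simp add: ennreal_mult'[symmetric] ennreal_add_left_cancel add.commute)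
  show ?thesis unfolding A X vol_simplex c_def[symmetric]
    using c0 by (simp add: divide_ennreal)
qed

lemma df_prob: "prob_space (dirichlet_flat p)"
  unfolding dirichlet_flat_def by (rule prob_space_uniform_measure) (auto simp: vol_simplex)

lemma vF_nonneg: "0 \<le> vF p x"
  unfolding vF_def by (auto intro: sum_nonneg)

lemma pointwise:
  assumes "p \<ge> 1" "q \<ge> 1"
  shows "(let \<mu> = to_simplex p x; \<nu> = to_simplex q y in
        \<Sum>u<p. \<Sum>v<q. (indep_coupling \<mu> \<nu> u v - indet_coupling p q \<mu> \<nu> u v)\<^sup>2) = vF p x * vF q y"
proof -
  have e: "indep_coupling \<mu> \<nu> u v - indet_coupling p q \<mu> \<nu> u v = (\<mu> u - 1 / real p) * (\<nu> v - 1 / real q)" for \<mu> \<nu> u v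
    using assms unfolding indep_coupling_def indet_coupling_def by (simp add: field_simps)
  show ?thesis unfolding Let_def e vF_def power_mult_distrib sum_product by simp
qed

theorem mainTheorem1:
  fixes p q :: nat
  assumes "p \<ge> 1" and "q \<ge> 1"
  shows "Delta p q = 1 / (real p * real q) * ((real p - 1) / (real p + 1)) * ((real q - 1) / (real q + 1))
         \<and> Delta p q \<le> 1 / (real p * real q)"
proof -
  let ?P = "dirichlet_flat p" and ?Q = "dirichlet_flat q"
  interpret Q: prob_space ?Q by (rule df_prob)
  define cp where "cp = (real p - 1) / (real p * (real p + 1))"
  define cq where "cq = (real q - 1) / (real q * (real q + 1))"
  have cp0: "0 \<le> cp" "cp \<le> 1 / real p" using assms unfolding cp_def by (auto simp: divide_simps)
  have cq0: "0 \<le> cq" "cq \<le> 1 / real q" using assms unfolding cq_def by (auto simp: divide_simps)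
  have "Delta p q = integral\<^sup>L (?P \<Otimes>\<^sub>M ?Q) (\<lambda>z. vF p (fst z) * vF q (snd z))"
    unfolding Delta_def by (intro Bochner_Integration.integral_cong refl) (auto simp: pointwise[OF assms] split: prod.splits)
  also have "\<dots> = enn2real (\<integral>\<^sup>+z. ennreal (vF p (fst z) * vF q (snd z)) \<partial>(?P \<Otimes>\<^sub>M ?Q))"
    by (rule integral_eq_nn_integral) (auto simp: vF_nonneg)
  also have "(\<integral>\<^sup>+z. ennreal (vF p (fst z) * vF q (snd z)) \<partial>(?P \<Otimes>\<^sub>M ?Q))
      = (\<integral>\<^sup>+x. \<integral>\<^sup>+y. ennreal (vF p x * vF q y) \<partial>?Q \<partial>?P)"
    by (subst Q.nn_integral_fst[symmetric]) auto
  also have "\<dots> = (\<integral>\<^sup>+x. ennreal (vF p x) * (\<integral>\<^sup>+y. ennreal (vF q y) \<partial>?Q) \<partial>?P)"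
    by (intro nn_integral_cong) (simp add: ennreal_mult vF_nonneg nn_integral_cmult)
  also have "\<dots> = (\<integral>\<^sup>+x. ennreal (vF p x) \<partial>?P) * (\<integral>\<^sup>+y. ennreal (vF q y) \<partial>?Q)"
    by (rule nn_integral_multc) auto
  also have "\<dots> = ennreal (cp * cq)"
    unfolding vF_int[OF assms(1)] vF_int[OF assms(2)] cp_def[symmetric] cq_def[symmetric]
    using cp0 cq0 by (rule_tac ennreal_mult[symmetric]) auto
  finally have D: "Delta p q = cp * cq" using cp0 cq0 by simp
  have "cp * cq \<le> 1 / real p * (1 / real q)"
    using cp0 cq0 by (intro mult_mono) auto
  then show ?thesis unfolding D cp_def cq_def by (simp add: field_simps)
qed

end
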